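(* Let $\omega\ge 4$ be an integer and let $\Gamma$ be a connected finite simple graph. Then $C_\omega(L(\Gamma))\cong\Gamma$ if and only if $\Gamma$ is $\omega$-regular.
   Context: $L(\Gamma)$ is the line graph of $\Gamma$: its vertices are the edges of $\Gamma$, two being adjacent iff they share an endpoint. For a graph $H$ and an integer $\omega$, the $\omega$-clique graph $C_\omega(H)$ is the graph whose vertices are the cliques (vertex sets of complete subgraphs) of order exactly $\omega$ in $H$, two distinct such cliques being adjacent iff they have nonempty intersection. *)

theory Defs
  imports Main
begin

type_synonym 'a graph = "'a set \<times> 'a set set"

definition verts :: "'a graph \<Rightarrow> 'a set" where "verts G = fst G"
definition edges :: "'a graph \<Rightarrow> 'a set set" where "edges G = snd G"

definition simple_graph :: "'a graph \<Rightarrow> bool" where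
  "simple_graph G \<longleftrightarrow> finite (verts G) \<and>
     (\<forall>e\<in>edges G. e \<subseteq> verts G \<and> card e = 2)"

definition adj :: "'a graph \<Rightarrow> 'a \<Rightarrow> 'a \<Rightarrow> bool" where
  "adj G u v \<longleftrightarrow> u \<noteq> v \<and> {u, v} \<in> edges G"

definition connected_graph :: "'a graph \<Rightarrow> bool" where
  "connected_graph G \<longleftrightarrow> verts G \<noteq> {} \<and>
     (\<forall>u\<in>verts G. \<forall>v\<in>verts G. (adj G)\<^sup>*\<^sup>* u v)"

definition degree :: "'a graph \<Rightarrow> 'a \<Rightarrow> nat" where
  "degree G v = card {u \<in> verts G. adj G v u}"

definition regular :: "nat \<Rightarrow> 'a graph \<Rightarrow> bool" where
  "regular k G \<longleftrightarrow> (\<forall>v\<in>verts G. degree G v = k)"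

definition line_graph :: "'a graph \<Rightarrow> 'a set graph" where
  "line_graph G = (edges G, {{e, f} | e f. e \<in> edges G \<and> f \<in> edges G \<and> e \<noteq> f \<and> e \<inter> f \<noteq> {}})"

definition is_clique :: "'a graph \<Rightarrow> 'a set \<Rightarrow> bool" where
  "is_clique H K \<longleftrightarrow> K \<subseteq> verts H \<and> (\<forall>u\<in>K. \<forall>v\<in>K. u \<noteq> v \<longrightarrow> adj H u v)"

definition clique_graph :: "nat \<Rightarrow> 'a graph \<Rightarrow> 'a set graph" where
  "clique_graph \<omega> H =
     (let C = {K. is_clique H K \<and> finite K \<and> card K = \<omega>} in
      (C, {{K, K'} | K K'. K \<in> C \<and> K' \<in> C \<and> K \<noteq> K' \<and> K \<inter> K' \<noteq> {}}))"

definition graph_iso :: "'a graph \<Rightarrow> 'b graph \<Rightarrow> bool" where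
  "graph_iso G H \<longleftrightarrow> (\<exists>f. bij_betw f (verts G) (verts H) \<and>
     (\<forall>u\<in>verts G. \<forall>v\<in>verts G. adj G u v \<longleftrightarrow> adj H (f u) (f v)))"

end

theory Submission
  imports Defs
begin

definition estar :: "'a graph \<Rightarrow> 'a \<Rightarrow> 'a set set" where
  "estar G v = {e\<in>edges G. v \<in> e}"

lemma adj_line: "adj (line_graph G) e f \<longleftrightarrow> e \<in> edges G \<and> f \<in> edges G \<and> e \<noteq> f \<and> e \<inter> f \<noteq> {}"
  unfolding adj_def line_graph_def edges_def by (auto simp: doubleton_eq_iff)

lemma verts_line: "verts (line_graph G) = edges G"
  unfolding verts_def line_graph_def edges_def by simp

lemma verts_clique: "verts (clique_graph \<omega> H) = {K. is_clique H K \<and> finite K \<and> card K = \<omega>}"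
  by (simp add: clique_graph_def verts_def Let_def)

lemma adj_clique: "adj (clique_graph \<omega> H) K K' \<longleftrightarrow>
   K \<in> verts (clique_graph \<omega> H) \<and> K' \<in> verts (clique_graph \<omega> H) \<and> K \<noteq> K' \<and> K \<inter> K' \<noteq> {}"
  unfolding adj_def clique_graph_def edges_def verts_def Let_def by (auto simp: doubleton_eq_iff)

lemma card2_pick: assumes "card e = 2" "b \<in> e" shows "\<exists>c. c \<noteq> b \<and> e = {b, c}"
proof -
  obtain x y where xy: "e = {x, y}" "x \<noteq> y" using assms(1) card_2_iff by metis
  have "b = x \<or> b = y" using xy assms(2) by blast
  then show ?thesis
  proof
    assume "b = x" then show ?thesis using xy by (intro exI[of _ y]) simp
  next
    assume "b = y" then have "e = {b, x}" using xy by (simp add: insert_commute)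
    then show ?thesis using xy \<open>b = y\<close> by (intro exI[of _ x]) simp
  qed
qed

lemma common_point:
  assumes c2: "\<forall>e\<in>K. card e = 2" and pw: "\<forall>e\<in>K. \<forall>f\<in>K. e \<noteq> f \<longrightarrow> e \<inter> f \<noteq> {}"
    and fin: "finite K" and c4: "card K \<ge> 4"
  shows "\<exists>c. \<forall>e\<in>K. c \<in> e"
proof (rule ccontr)
  assume nc: "\<not> (\<exists>c. \<forall>e\<in>K. c \<in> e)"
  obtain e1 where e1: "e1 \<in> K" using c4 by fastforce
  obtain a b where ab: "e1 = {a, b}" "a \<noteq> b" using c2 e1 card_2_iff by metis
  obtain e2 where e2: "e2 \<in> K" "a \<notin> e2" using nc by blast
  obtain e3 where e3: "e3 \<in> K" "b \<notin> e3" using nc by blast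
  have "b \<in> e2" using pw e1 e2 ab by (metis Int_emptyI insertCI insertE singletonD)
  then obtain c where c: "c \<noteq> b" "e2 = {b, c}" using card2_pick c2 e2 by metis
  have "a \<in> e3" using pw e1 e3 ab by (metis Int_emptyI insertCI insertE singletonD)
  then obtain c' where c': "c' \<noteq> a" "e3 = {a, c'}" using card2_pick c2 e3 by metis
  have "e2 \<noteq> e3" using \<open>b \<in> e2\<close> e3 by blast
  then have "e2 \<inter> e3 \<noteq> {}" using pw e2 e3 by blast
  then have cc: "c' = c" using c c' e2 e3 ab by auto
  have "K \<subseteq> {e1, e2, e3}"
  proof
    fix e assume e: "e \<in> K"
    show "e \<in> {e1, e2, e3}"
    proof (rule ccontr)
      assume ne: "e \<notin> {e1, e2, e3}"
      then have i1: "e \<inter> e1 \<noteq> {}" and i2: "e \<inter> e2 \<noteq> {}" and i3: "e \<inter> e3 \<noteq> {}"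
        using pw e e1 e2 e3 by auto
      have "a \<in> e \<or> b \<in> e" using i1 ab by blast
      then show False
      proof
        assume "a \<in> e"
        then obtain z where z: "z \<noteq> a" "e = {a, z}" using card2_pick c2 e by metis
        have "z = b \<or> z = c" using i2 z e2 c by blast
        then show False using ne z ab c' cc by blast
      next
        assume "b \<in> e"
        then obtain z where z: "z \<noteq> b" "e = {b, z}" using card2_pick c2 e by metis
        have "z = a \<or> z = c" using i3 z e3 c' cc \<open>b \<notin> e3\<close> by blast
        then show False using ne z ab c by (metis insert_commute insertCI)
      qed
    qed
  qed
  then have k3: "card K \<le> card {e1, e2, e3}" by (rule card_mono[rotated]) simp
  have "card {e1, e2, e3} \<le> 3" by (simp add: card_insert_if)
  then show False using c4 k3 by linarith
qed


abbreviation CL :: "nat \<Rightarrow> 'a graph \<Rightarrow> 'a set set set" where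
  "CL \<omega> G \<equiv> verts (clique_graph \<omega> (line_graph G))"

lemma sg_edge: "simple_graph G \<Longrightarrow> e \<in> edges G \<Longrightarrow> e \<subseteq> verts G \<and> card e = 2"
  by (simp add: simple_graph_def)

lemma sg_fin: "simple_graph G \<Longrightarrow> finite (verts G)"
  by (simp add: simple_graph_def)

lemma sg_fin_edges: assumes "simple_graph G" shows "finite (edges G)"
proof -
  have "edges G \<subseteq> Pow (verts G)" using sg_edge[OF assms] by blast
  then show ?thesis using sg_fin[OF assms] finite_subset by blast
qed

lemma fin_estar: assumes "simple_graph G" shows "finite (estar G v)"
  using sg_fin_edges[OF assms] unfolding estar_def by auto

lemma adj_verts: "simple_graph G \<Longrightarrow> adj G u v \<Longrightarrow> u \<in> verts G \<and> v \<in> verts G"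
  unfolding adj_def using sg_edge by blast

lemma adj_sym: "adj G u v \<Longrightarrow> adj G v u"
  unfolding adj_def by (auto simp: insert_commute)

lemma estar_inter: assumes "simple_graph G" "u \<noteq> v"
  shows "estar G u \<inter> estar G v \<subseteq> {{u, v}}"
proof
  fix e assume e: "e \<in> estar G u \<inter> estar G v"
  then have "card e = 2" "u \<in> e" "v \<in> e" using sg_edge[OF assms(1)] unfolding estar_def by auto
  then obtain c where "c \<noteq> u" "e = {u, c}" using card2_pick by metis
  then show "e \<in> {{u, v}}" using \<open>v \<in> e\<close> assms(2) by auto
qed

lemma estar_small: assumes "simple_graph G" "u \<noteq> v" "X \<subseteq> estar G u" "X \<subseteq> estar G v" "card X \<ge> 2"
  shows False
proof -
  have "X \<subseteq> {{u, v}}" using estar_inter[OF assms(1,2)] assms(3,4) by blast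
  then have "card X \<le> card {{u, v}}" by (intro card_mono) auto
  then have "card X \<le> 1" by simp
  then show False using assms(5) by simp
qed

lemma adj_iff_edge: "adj G u v \<longleftrightarrow> u \<noteq> v \<and> {u, v} \<in> edges G"
  by (simp add: adj_def)

lemma degree_estar: assumes "simple_graph G" "v \<in> verts G"
  shows "degree G v = card (estar G v)"
proof -
  have inj: "inj_on (\<lambda>u. {v, u}) {u \<in> verts G. adj G v u}"
    unfolding adj_def by (auto intro!: inj_onI simp: doubleton_eq_iff)
  have img: "(\<lambda>u. {v, u}) ` {u \<in> verts G. adj G v u} = estar G v"
  proof
    show "(\<lambda>u. {v, u}) ` {u \<in> verts G. adj G v u} \<subseteq> estar G v"
      unfolding estar_def adj_def by auto
  next
    show "estar G v \<subseteq> (\<lambda>u. {v, u}) ` {u \<in> verts G. adj G v u}"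
    proof
      fix e assume e: "e \<in> estar G v"
      then have "card e = 2" "v \<in> e" "e \<in> edges G" "e \<subseteq> verts G"
        using sg_edge[OF assms(1)] unfolding estar_def by auto
      then obtain c where "c \<noteq> v" "e = {v, c}" using card2_pick by metis
      then show "e \<in> (\<lambda>u. {v, u}) ` {u \<in> verts G. adj G v u}"
        using \<open>e \<in> edges G\<close> \<open>e \<subseteq> verts G\<close> unfolding adj_def by auto
    qed
  qed
  show ?thesis unfolding degree_def using card_image[OF inj] img by simp
qed

lemma mem_CL: assumes "simple_graph G" "\<omega> \<ge> 4"
  shows "K \<in> CL \<omega> G \<longleftrightarrow> (\<exists>c\<in>verts G. K \<subseteq> estar G c) \<and> card K = \<omega>"
proof
  assume K: "K \<in> CL \<omega> G"
  then have sub: "K \<subseteq> edges G" and pw: "\<forall>e\<in>K. \<forall>f\<in>K. e \<noteq> f \<longrightarrow> e \<inter> f \<noteq> {}"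
    and fin: "finite K" and cK: "card K = \<omega>"
    unfolding verts_clique is_clique_def verts_line adj_line by auto
  have c2: "\<forall>e\<in>K. card e = 2" using sub sg_edge[OF assms(1)] by blast
  obtain c where c: "\<forall>e\<in>K. c \<in> e" using common_point[OF c2 pw fin] cK assms(2) by auto
  obtain e where "e \<in> K" using cK assms(2) by fastforce
  then have "c \<in> verts G" using c sub sg_edge[OF assms(1)] by blast
  moreover have "K \<subseteq> estar G c" using c sub unfolding estar_def by blast
  ultimately show "(\<exists>c\<in>verts G. K \<subseteq> estar G c) \<and> card K = \<omega>" using cK by blast
next
  assume "(\<exists>c\<in>verts G. K \<subseteq> estar G c) \<and> card K = \<omega>"
  then obtain c where c: "K \<subseteq> estar G c" and cK: "card K = \<omega>" by blast
  have fin: "finite K" using cK assms(2) card.infinite by fastforce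
  show "K \<in> CL \<omega> G"
    unfolding verts_clique is_clique_def verts_line adj_line using c fin cK
    unfolding estar_def by blast
qed

lemma adjC: "adj (clique_graph \<omega> (line_graph G)) K K' \<longleftrightarrow>
   K \<in> CL \<omega> G \<and> K' \<in> CL \<omega> G \<and> K \<noteq> K' \<and> K \<inter> K' \<noteq> {}"
  by (rule adj_clique)

lemma fin_CL: assumes "simple_graph G" shows "finite (CL \<omega> G)"
proof -
  have "CL \<omega> G \<subseteq> Pow (edges G)"
    unfolding verts_clique is_clique_def verts_line by auto
  then show ?thesis using sg_fin_edges[OF assms] finite_subset by blast
qed

lemma nbr_deg:
  assumes sg: "simple_graph G" and bij: "bij_betw f (CL \<omega> G) (verts G)"
    and fadj: "\<forall>K\<in>CL \<omega> G. \<forall>K'\<in>CL \<omega> G. adj (clique_graph \<omega> (line_graph G)) K K' \<longleftrightarrow> adj G (f K) (f K')"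
    and K: "K \<in> CL \<omega> G"
  shows "card {K'\<in>CL \<omega> G. adj (clique_graph \<omega> (line_graph G)) K K'} = degree G (f K)"
proof -
  have inj: "inj_on f (CL \<omega> G)" using bij bij_betw_def by blast
  have img: "f ` {K'\<in>CL \<omega> G. adj (clique_graph \<omega> (line_graph G)) K K'} = {u \<in> verts G. adj G (f K) u}"
  proof
    show "f ` {K'\<in>CL \<omega> G. adj (clique_graph \<omega> (line_graph G)) K K'} \<subseteq> {u \<in> verts G. adj G (f K) u}"
      using fadj K bij bij_betwE by blast
  next
    show "{u \<in> verts G. adj G (f K) u} \<subseteq> f ` {K'\<in>CL \<omega> G. adj (clique_graph \<omega> (line_graph G)) K K'}"
    proof
      fix u assume u: "u \<in> {u \<in> verts G. adj G (f K) u}"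
      then obtain K' where "K' \<in> CL \<omega> G" "u = f K'" using bij by (metis (no_types, lifting) bij_betw_imp_surj_on imageE mem_Collect_eq)
      then show "u \<in> f ` {K'\<in>CL \<omega> G. adj (clique_graph \<omega> (line_graph G)) K K'}"
        using u fadj K by auto
    qed
  qed
  have "card {K'\<in>CL \<omega> G. adj (clique_graph \<omega> (line_graph G)) K K'} = card {u \<in> verts G. adj G (f K) u}"
    using img card_image inj by (metis (no_types, lifting) inj_on_subset mem_Collect_eq subsetI)
  then show ?thesis unfolding degree_def .
qed

lemma inj_minus: "inj_on (\<lambda>h. X - {h}) X"
  by (auto intro!: inj_onI)



definition nbrs :: "nat \<Rightarrow> 'a graph \<Rightarrow> 'a set set \<Rightarrow> 'a set set set" where
  "nbrs \<omega> G K = {K'\<in>CL \<omega> G. adj (clique_graph \<omega> (line_graph G)) K K'}"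

lemma fin_nbrs: "simple_graph G \<Longrightarrow> finite (nbrs \<omega> G K)"
  unfolding nbrs_def using fin_CL[of G] by auto

lemma R_CL: assumes sg: "simple_graph G" and w: "\<omega> \<ge> 4" and u: "u \<in> verts G"
  and du: "degree G u = \<omega> + 1" and h: "h \<in> estar G u"
  shows "estar G u - {h} \<in> CL \<omega> G" "card (estar G u - {h}) = \<omega>"
proof -
  show c: "card (estar G u - {h}) = \<omega>" using degree_estar[OF sg u] du h fin_estar[OF sg] by simp
  show "estar G u - {h} \<in> CL \<omega> G" unfolding mem_CL[OF sg w] using u c by blast
qed

lemma R_adj: assumes sg: "simple_graph G" and w: "\<omega> \<ge> 4" and u: "u \<in> verts G"
  and du: "degree G u = \<omega> + 1" and e: "e \<in> estar G u" and h: "h \<in> estar G u" and eh: "e \<noteq> h"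
  shows "adj (clique_graph \<omega> (line_graph G)) (estar G u - {e}) (estar G u - {h})"
proof -
  have "card (estar G u - {e} - {h}) = \<omega> - 1"
    using R_CL(2)[OF sg w u du e] h eh fin_estar[OF sg] by simp
  then have "card (estar G u - {e} - {h}) > 0" using w by simp
  then have "estar G u - {e} - {h} \<noteq> {}" by (metis card_gt_0_iff)
  then have "(estar G u - {e}) \<inter> (estar G u - {h}) \<noteq> {}" by blast
  moreover have "estar G u - {e} \<noteq> estar G u - {h}" using e eh by blast
  ultimately show ?thesis unfolding adjC using R_CL(1)[OF sg w u du] e h by blast
qed

lemma star_CL: assumes sg: "simple_graph G" and w: "\<omega> \<ge> 4" and u: "u \<in> verts G"
  and du: "degree G u = \<omega>"
  shows "estar G u \<in> CL \<omega> G"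
proof -
  have "\<exists>c\<in>verts G. estar G u \<subseteq> estar G c" using u by blast
  then show ?thesis unfolding mem_CL[OF sg w] using du degree_estar[OF sg u] by simp
qed

lemma Tadj:
  assumes sg: "simple_graph G" and w: "\<omega> \<ge> 4"
    and bound: "\<forall>K\<in>CL \<omega> G. card (nbrs \<omega> G K) \<le> \<omega> + 1"
    and a: "a \<in> verts G" and b: "b \<in> verts G" and ab: "adj G a b"
    and da: "degree G a = \<omega> + 1" and db: "degree G b = \<omega> + 1"
  shows False
proof -
  define S where "S = estar G"
  have neq: "a \<noteq> b" using ab adj_def by metis
  have e0a: "{a, b} \<in> S a" and e0b: "{a, b} \<in> S b" using ab unfolding S_def estar_def adj_def by auto
  have cSb: "card (S b) = \<omega> + 1" using degree_estar[OF sg b] db S_def by simp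
  have "card (S b - {{a,b}}) = \<omega>" using cSb e0b fin_estar[OF sg] S_def by simp
  then have "S b - {{a,b}} \<noteq> {}" using w by (metis card.empty not_numeral_le_zero)
  then obtain e where e: "e \<in> S b" "e \<noteq> {a,b}" by blast
  define K where "K = S b - {e}"
  define N1 where "N1 = (\<lambda>h. S b - {h}) ` (S b - {e})"
  define N2 where "N2 = (\<lambda>h. S a - {h}) ` (S a - {{a,b}})"
  have KCL: "K \<in> CL \<omega> G" using R_CL[OF sg w b db] e unfolding K_def S_def by blast
  have N1s: "N1 \<subseteq> nbrs \<omega> G K"
  proof
    fix X assume "X \<in> N1"
    then obtain h where h: "h \<in> S b" "h \<noteq> e" "X = S b - {h}" unfolding N1_def by blast
    have "adj (clique_graph \<omega> (line_graph G)) K X"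
      unfolding K_def h(3) S_def using R_adj[OF sg w b db] e h(1,2) unfolding S_def by metis
    moreover have "X \<in> CL \<omega> G" unfolding h(3) S_def using R_CL(1)[OF sg w b db] h(1) unfolding S_def by blast
    ultimately show "X \<in> nbrs \<omega> G K" unfolding nbrs_def by blast
  qed
  have N2s: "N2 \<subseteq> nbrs \<omega> G K"
  proof
    fix X assume "X \<in> N2"
    then obtain h where h: "h \<in> S a" "h \<noteq> {a,b}" "X = S a - {h}" unfolding N2_def by blast
    have XCL: "X \<in> CL \<omega> G" using R_CL[OF sg w a da] h unfolding S_def by blast
    have cX: "card X = \<omega>" using R_CL[OF sg w a da] h unfolding S_def by blast
    have "{a,b} \<in> X \<inter> K" using h e0a e0b e unfolding K_def by auto
    moreover have "X \<noteq> K"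
    proof
      assume "X = K"
      have x1: "X \<subseteq> estar G a" "X \<subseteq> estar G b" using h(3) \<open>X = K\<close> unfolding K_def S_def by blast+
      have x2: "card X \<ge> 2" using cX w by simp
      show False using estar_small[OF sg neq x1 x2] .
    qed
    ultimately show "X \<in> nbrs \<omega> G K" unfolding nbrs_def adjC using XCL KCL by blast
  qed
  have disj: "N1 \<inter> N2 = {}"
  proof (rule ccontr)
    assume "N1 \<inter> N2 \<noteq> {}"
    then obtain X where "X \<in> N1" "X \<in> N2" by blast
    then obtain h1 h2 where hh: "h1 \<in> S b" "X = S b - {h1}" "h2 \<in> S a" "X = S a - {h2}"
      unfolding N1_def N2_def by blast
    have x1: "X \<subseteq> estar G a" "X \<subseteq> estar G b" using hh(2,4) unfolding S_def by blast+
    have "card X = \<omega>" unfolding hh(4) using R_CL(2)[OF sg w a da] hh(3) unfolding S_def by blast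
    then have x2: "card X \<ge> 2" using w by simp
    show False using estar_small[OF sg neq x1 x2] .
  qed
  have cN1: "card N1 = \<omega>"
  proof -
    have "card N1 = card (S b - {e})" unfolding N1_def
      by (rule card_image, rule inj_on_subset[OF inj_minus]) auto
    then show ?thesis using R_CL(2)[OF sg w b db] e S_def by simp
  qed
  have cN2: "card N2 = \<omega>"
  proof -
    have "card N2 = card (S a - {{a,b}})" unfolding N2_def
      by (rule card_image, rule inj_on_subset[OF inj_minus]) auto
    then show ?thesis using R_CL(2)[OF sg w a da] e0a S_def by simp
  qed
  have fN: "finite N1" "finite N2" using fin_nbrs[OF sg] N1s N2s finite_subset by blast+
  have "card (N1 \<union> N2) = 2 * \<omega>" using card_Un_disjoint[OF fN disj] cN1 cN2 by simp
  moreover have "card (N1 \<union> N2) \<le> card (nbrs \<omega> G K)"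
    using N1s N2s fin_nbrs[OF sg] by (intro card_mono) auto
  ultimately show False using bound KCL w by fastforce
qed



lemma easy_dir: assumes sg: "simple_graph G" and w: "\<omega> \<ge> 4" and reg: "regular \<omega> G"
  shows "graph_iso (clique_graph \<omega> (line_graph G)) G"
proof -
  have deg: "\<forall>v\<in>verts G. degree G v = \<omega>" using reg unfolding regular_def by blast
  have dS: "\<forall>v\<in>verts G. card (estar G v) = \<omega>" using deg degree_estar[OF sg] by simp
  have inj: "inj_on (estar G) (verts G)"
  proof (rule inj_onI)
    fix a b assume a: "a \<in> verts G" and b: "b \<in> verts G" and ab: "estar G a = estar G b"
    show "a = b"
    proof (rule ccontr)
      assume ne: "a \<noteq> b"
      have x1: "estar G a \<subseteq> estar G a" "estar G a \<subseteq> estar G b" using ab by auto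
      have x2: "card (estar G a) \<ge> 2" using dS a w by simp
      show False using estar_small[OF sg ne x1 x2] .
    qed
  qed
  have img: "estar G ` verts G = CL \<omega> G"
  proof
    show "estar G ` verts G \<subseteq> CL \<omega> G" using star_CL[OF sg w] deg by blast
  next
    show "CL \<omega> G \<subseteq> estar G ` verts G"
    proof
      fix K assume "K \<in> CL \<omega> G"
      then obtain c where c: "c \<in> verts G" "K \<subseteq> estar G c" and cK: "card K = \<omega>"
        using mem_CL[OF sg w] by blast
      have "K = estar G c" using card_seteq[OF fin_estar[OF sg] c(2)] cK dS c(1) by simp
      then show "K \<in> estar G ` verts G" using c(1) by blast
    qed
  qed
  have bij: "bij_betw (estar G) (verts G) (CL \<omega> G)" unfolding bij_betw_def using inj img by blast
  have adjs: "adj (clique_graph \<omega> (line_graph G)) (estar G a) (estar G b) \<longleftrightarrow> adj G a b"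
    if a: "a \<in> verts G" and b: "b \<in> verts G" for a b
  proof
    assume h: "adj (clique_graph \<omega> (line_graph G)) (estar G a) (estar G b)"
    then have ne: "estar G a \<noteq> estar G b" and i: "estar G a \<inter> estar G b \<noteq> {}" unfolding adjC by auto
    then have ab: "a \<noteq> b" by blast
    obtain g where g: "g \<in> estar G a \<inter> estar G b" using i by blast
    then have "g = {a, b}" using estar_inter[OF sg ab] by blast
    then have "{a, b} \<in> edges G" using g unfolding estar_def by blast
    then show "adj G a b" using ab unfolding adj_iff_edge by blast
  next
    assume h: "adj G a b"
    then have ab: "a \<noteq> b" and e: "{a, b} \<in> edges G" unfolding adj_iff_edge by auto
    have "{a, b} \<in> estar G a \<inter> estar G b" using e unfolding estar_def by blast
    moreover have "estar G a \<noteq> estar G b" using inj a b ab inj_on_def by metis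
    moreover have "estar G a \<in> CL \<omega> G" "estar G b \<in> CL \<omega> G" using img a b by blast+
    ultimately show "adj (clique_graph \<omega> (line_graph G)) (estar G a) (estar G b)"
      unfolding adjC by blast
  qed
  define g where "g = the_inv_into (verts G) (estar G)"
  have bijg: "bij_betw g (CL \<omega> G) (verts G)" unfolding g_def using bij_betw_the_inv_into[OF bij] .
  have gK: "estar G (g K) = K" if "K \<in> CL \<omega> G" for K
    unfolding g_def using f_the_inv_into_f[OF inj] that img by blast
  have "\<forall>K\<in>CL \<omega> G. \<forall>K'\<in>CL \<omega> G.
      adj (clique_graph \<omega> (line_graph G)) K K' \<longleftrightarrow> adj G (g K) (g K')"
  proof (intro ballI)
    fix K K' assume K: "K \<in> CL \<omega> G" and K': "K' \<in> CL \<omega> G"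
    have "g K \<in> verts G" "g K' \<in> verts G" using bijg K K' bij_betwE by blast+
    then show "adj (clique_graph \<omega> (line_graph G)) K K' \<longleftrightarrow> adj G (g K) (g K')"
      using adjs gK[OF K] gK[OF K'] by metis
  qed
  then show ?thesis unfolding graph_iso_def using bijg by blast
qed



lemma arith_ge: assumes "(\<omega>::nat) \<ge> 4" "D \<ge> \<omega> + 2" "\<omega> * (D - \<omega>) \<le> D" shows False
proof -
  obtain k where Dk: "D = \<omega> + k" using assms(2) le_add1 le_Suc_ex by (metis add_leD1)
  have k2: "k \<ge> 2" using assms(2) Dk by simp
  have a: "\<omega> * k \<le> \<omega> + k" using assms(3) Dk by simp
  have b: "4 * k \<le> \<omega> * k" using assms(1) by (rule mult_le_mono1)
  have c: "\<omega> * 2 \<le> \<omega> * k" using k2 by (rule mult_le_mono2)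
  show False using a b c k2 by linarith
qed

lemma hard_ge:
  assumes sg: "simple_graph G" and w: "\<omega> \<ge> 4" and v: "v \<in> verts G"
    and cSv: "card (estar G v) = D" and ge: "D \<ge> \<omega> + 2"
    and nbD: "\<forall>K\<in>CL \<omega> G. card (nbrs \<omega> G K) \<le> D"
  shows False
proof -
  define S where "S = estar G v"
  have "\<omega> \<le> card S" using cSv ge S_def by simp
  then obtain K where K: "K \<subseteq> S" "card K = \<omega>" "finite K"
    by (rule obtain_subset_with_card_n)
  have KCL: "K \<in> CL \<omega> G" using mem_CL[OF sg w] v K S_def by blast
  define P where "P = K \<times> (S - K)"
  define g where "g = (\<lambda>(x, y). insert y (K - {x}))"
  have inj: "inj_on g P"
  proof (rule inj_onI)
    fix p q assume p: "p \<in> P" and q: "q \<in> P" and eq: "g p = g q"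
    obtain x y where pxy: "p = (x, y)" by (cases p)
    obtain x' y' where qxy: "q = (x', y')" by (cases q)
    have hx: "x \<in> K" "y \<notin> K" "x' \<in> K" "y' \<notin> K" using p q pxy qxy P_def by auto
    have eq2: "insert y (K - {x}) = insert y' (K - {x'})" using eq pxy qxy g_def by simp
    have yy: "y = y'"
    proof -
      have "y \<in> insert y' (K - {x'})" using eq2 by blast
      then show ?thesis using hx by blast
    qed
    have xx: "x = x'"
    proof (rule ccontr)
      assume "x \<noteq> x'"
      then have "x \<in> insert y' (K - {x'})" using hx by blast
      then have "x \<in> insert y (K - {x})" using eq2 by simp
      then show False using hx by blast
    qed
    show "p = q" using pxy qxy xx yy by simp
  qed
  have gsub: "g ` P \<subseteq> nbrs \<omega> G K"
  proof
    fix Z assume "Z \<in> g ` P"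
    then obtain x y where xy: "x \<in> K" "y \<in> S" "y \<notin> K" "Z = insert y (K - {x})"
      unfolding P_def g_def by auto
    have cK1: "card (K - {x}) = \<omega> - 1" using K xy by simp
    have "card Z = \<omega>" using cK1 xy K(3) w by (simp add: card_insert_if)
    moreover have "Z \<subseteq> estar G v" using xy K S_def by blast
    ultimately have ZCL: "Z \<in> CL \<omega> G" using mem_CL[OF sg w] v by blast
    have "card (K - {x}) > 0" using cK1 w by simp
    then have "K - {x} \<noteq> {}" by (metis card_gt_0_iff)
    then have "K \<inter> Z \<noteq> {}" using xy by blast
    moreover have "K \<noteq> Z" using xy by blast
    ultimately show "Z \<in> nbrs \<omega> G K" unfolding nbrs_def adjC using ZCL KCL by blast
  qed
  have cP: "card P = \<omega> * (D - \<omega>)"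
  proof -
    have "card (S - K) = D - \<omega>" using card_Diff_subset[OF K(3) K(1)] K cSv S_def by simp
    then show ?thesis unfolding P_def using K by (simp add: card_cartesian_product)
  qed
  have "\<omega> * (D - \<omega>) = card (g ` P)" using card_image[OF inj] cP by simp
  also have "\<dots> \<le> card (nbrs \<omega> G K)" using gsub fin_nbrs[OF sg] by (rule card_mono[rotated])
  also have "\<dots> \<le> D" using nbD KCL by blast
  finally show False using arith_ge w ge by blast
qed



lemma hard_eq:
  assumes sg: "simple_graph G" and w: "\<omega> \<ge> 4" and conn: "connected_graph G"
    and bij: "bij_betw f (CL \<omega> G) (verts G)"
    and fadj: "\<forall>K\<in>CL \<omega> G. \<forall>K'\<in>CL \<omega> G. adj (clique_graph \<omega> (line_graph G)) K K' \<longleftrightarrow> adj G (f K) (f K')"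
    and v: "v \<in> verts G" and dv: "degree G v = \<omega> + 1"
    and Dge: "\<forall>u\<in>verts G. degree G u \<le> \<omega> + 1"
  shows False
proof -
  define S where "S = estar G"
  have fK: "\<forall>K\<in>CL \<omega> G. f K \<in> verts G" using bij bij_betwE by blast
  have nb: "\<forall>K\<in>CL \<omega> G. card (nbrs \<omega> G K) = degree G (f K)"
    using nbr_deg[OF sg bij fadj] unfolding nbrs_def by blast
  have bound: "\<forall>K\<in>CL \<omega> G. card (nbrs \<omega> G K) \<le> \<omega> + 1" using nb fK Dge by metis
  note T = Tadj[OF sg w bound]
  have cSv: "card (S v) = \<omega> + 1" using degree_estar[OF sg v] dv S_def by simp
  have finS: "finite (S v)" using fin_estar[OF sg] S_def by simp
  show False
  proof (cases "\<exists>u. adj G v u \<and> degree G u \<ge> \<omega>")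
    case True
    then obtain u where vu: "adj G v u" and du0: "degree G u \<ge> \<omega>" by blast
    have u: "u \<in> verts G" using adj_verts[OF sg vu] by blast
    have "degree G u \<noteq> \<omega> + 1" using T[OF v u vu dv] by blast
    then have du: "degree G u = \<omega>" using du0 Dge u by fastforce
    have uv: "u \<noteq> v" using vu adj_def by metis
    define e0 where "e0 = {v, u}"
    have e0v: "e0 \<in> S v" and e0u: "e0 \<in> S u" using vu unfolding e0_def S_def estar_def adj_def by auto
    have SuCL: "S u \<in> CL \<omega> G" using star_CL[OF sg w u du] S_def by simp
    have cSu: "card (S u) = \<omega>" using degree_estar[OF sg u] du S_def by simp
    have notsub: "\<not> S u \<subseteq> S v"
    proof
      assume "S u \<subseteq> S v"
      then have x1: "S u \<subseteq> estar G u" "S u \<subseteq> estar G v" using S_def by auto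
      have x2: "card (S u) \<ge> 2" using cSu w by simp
      show False using estar_small[OF sg uv x1 x2] .
    qed
    have big: "degree G (f (S v - {e})) = \<omega> + 1" if e: "e \<in> S v" "e \<noteq> e0" for e
    proof -
      define K where "K = S v - {e}"
      have KCL: "K \<in> CL \<omega> G" using R_CL(1)[OF sg w v dv] e unfolding K_def S_def by blast
      define N where "N = insert (S u) ((\<lambda>h. S v - {h}) ` (S v - {e}))"
      have Nsub: "N \<subseteq> nbrs \<omega> G K"
      proof
        fix X assume "X \<in> N"
        then have "X = S u \<or> X \<in> (\<lambda>h. S v - {h}) ` (S v - {e})" unfolding N_def by blast
        then show "X \<in> nbrs \<omega> G K"
        proof
          assume X: "X = S u"
          have "e0 \<in> K \<inter> X" using e0u e0v e X unfolding K_def by blast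
          moreover have "K \<noteq> X" using notsub X unfolding K_def by blast
          ultimately show ?thesis unfolding nbrs_def adjC using KCL SuCL X by blast
        next
          assume "X \<in> (\<lambda>h. S v - {h}) ` (S v - {e})"
          then obtain h where h: "h \<in> S v" "h \<noteq> e" "X = S v - {h}" by blast
          have "adj (clique_graph \<omega> (line_graph G)) K X"
            unfolding K_def h(3) S_def using R_adj[OF sg w v dv] e h(1,2) unfolding S_def by metis
          moreover have "X \<in> CL \<omega> G" unfolding h(3) S_def using R_CL(1)[OF sg w v dv] h(1) unfolding S_def by blast
          ultimately show "X \<in> nbrs \<omega> G K" unfolding nbrs_def by blast
        qed
      qed
      have "S u \<notin> (\<lambda>h. S v - {h}) ` (S v - {e})" using notsub by blast
      moreover have "card ((\<lambda>h. S v - {h}) ` (S v - {e})) = \<omega>"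
      proof -
        have "card ((\<lambda>h. S v - {h}) ` (S v - {e})) = card (S v - {e})"
          by (rule card_image, rule inj_on_subset[OF inj_minus]) auto
        then show ?thesis using R_CL(2)[OF sg w v dv] e S_def by simp
      qed
      ultimately have "card N = \<omega> + 1" unfolding N_def using finS
        by (simp add: card_insert_disjoint)
      moreover have "card N \<le> card (nbrs \<omega> G K)" using Nsub fin_nbrs[OF sg] by (rule card_mono[rotated])
      ultimately have "degree G (f K) \<ge> \<omega> + 1" using nb KCL by simp
      then show ?thesis using Dge fK KCL unfolding K_def by (metis le_antisym)
    qed
    have "card (S v - {e0}) = \<omega>" using cSv e0v finS by simp
    then have "2 \<le> card (S v - {e0})" using w by simp
    then obtain P where P: "P \<subseteq> S v - {e0}" "card P = 2" by (rule obtain_subset_with_card_n)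
    then obtain e1 e2 where e12: "P = {e1, e2}" "e1 \<noteq> e2" using card_2_iff by metis
    have e1: "e1 \<in> S v" "e1 \<noteq> e0" and e2: "e2 \<in> S v" "e2 \<noteq> e0" using P(1) e12 by auto
    have a12: "adj (clique_graph \<omega> (line_graph G)) (S v - {e1}) (S v - {e2})"
      using R_adj[OF sg w v dv] e1(1) e2(1) e12(2) S_def by simp
    have K1: "S v - {e1} \<in> CL \<omega> G" and K2: "S v - {e2} \<in> CL \<omega> G"
      using R_CL(1)[OF sg w v dv] e1(1) e2(1) S_def by auto
    have "adj G (f (S v - {e1})) (f (S v - {e2}))" using fadj K1 K2 a12 by blast
    then show False using T fK K1 K2 big[OF e1] big[OF e2] by blast
  next
    case False
    then have small: "\<And>u. adj G v u \<Longrightarrow> degree G u < \<omega>" by force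
    define A where "A = (\<lambda>h. S v - {h}) ` S v"
    have ACL: "A \<subseteq> CL \<omega> G" unfolding A_def using R_CL(1)[OF sg w v dv] S_def by auto
    have closed: "K' \<in> A" if K: "K \<in> A" and K': "K' \<in> CL \<omega> G"
      and aK: "adj (clique_graph \<omega> (line_graph G)) K K'" for K K'
    proof -
      obtain h where h: "h \<in> S v" "K = S v - {h}" using K A_def by blast
      obtain c where c: "c \<in> verts G" "K' \<subseteq> S c" and cK': "card K' = \<omega>"
        using K' mem_CL[OF sg w] S_def by blast
      obtain g where g: "g \<in> K" "g \<in> K'" using aK unfolding adjC by blast
      have gv: "g \<in> S v" and gc: "g \<in> S c" using g h c by auto
      have cv: "c = v"
      proof (rule ccontr)
        assume "c \<noteq> v"
        then have "g = {v, c}" using estar_inter[OF sg, of v c] gv gc S_def by blast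
        then have "{v, c} \<in> edges G" using gv unfolding S_def estar_def by blast
        then have "adj G v c" using \<open>c \<noteq> v\<close> adj_iff_edge by metis
        then have "degree G c < \<omega>" by (rule small)
        moreover have "card K' \<le> card (S c)" using c(2) fin_estar[OF sg] S_def by (simp add: card_mono)
        ultimately show False using degree_estar[OF sg c(1)] cK' S_def by simp
      qed
      have sub: "K' \<subseteq> S v" using c cv by simp
      have "card (S v - K') = 1"
        using card_Diff_subset[OF finite_subset[OF sub finS] sub] cSv cK' by simp
      then obtain h' where h': "S v - K' = {h'}" by (rule card_1_singletonE)
      then have "K' = S v - {h'}" "h' \<in> S v" using sub by auto
      then show "K' \<in> A" unfolding A_def by blast
    qed
    define B where "B = f ` A"
    obtain h0 where h0: "h0 \<in> S v" using cSv by fastforce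
    define x0 where "x0 = f (S v - {h0})"
    have x0B: "x0 \<in> B" unfolding x0_def B_def A_def using h0 by blast
    have x0V: "x0 \<in> verts G" using x0B B_def ACL fK by blast
    have reach: "y \<in> B" if "(adj G)\<^sup>*\<^sup>* x0 y" for y
      using that
    proof (induction rule: rtranclp_induct)
      case base
      then show ?case using x0B .
    next
      case (step x y)
      obtain K where K: "K \<in> A" "x = f K" using step.IH B_def by blast
      have "y \<in> verts G" using adj_verts[OF sg step.hyps(2)] by blast
      then obtain K' where K': "K' \<in> CL \<omega> G" "y = f K'"
        using bij bij_betw_imp_surj_on by (metis imageE)
      have "adj (clique_graph \<omega> (line_graph G)) K K'"
        using fadj K K' ACL step.hyps(2) by blast
      then have "K' \<in> A" using closed K(1) K'(1) by blast
      then show ?case using K' B_def by blast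
    qed
    have VB: "verts G \<subseteq> B"
      using conn x0V reach unfolding connected_graph_def by blast
    have finA: "finite A" unfolding A_def using finS by simp
    have "card (verts G) \<le> card B" using VB finA B_def by (simp add: card_mono)
    also have "\<dots> \<le> card A" unfolding B_def using finA by (rule card_image_le)
    also have "\<dots> \<le> card (S v)" unfolding A_def using finS by (rule card_image_le)
    finally have cV: "card (verts G) \<le> \<omega> + 1" using cSv by simp
    have vn: "v \<notin> {u \<in> verts G. adj G v u}" unfolding adj_def by simp
    have finN: "finite {u \<in> verts G. adj G v u}" using sg_fin[OF sg] by simp
    have "card (insert v {u \<in> verts G. adj G v u}) = \<omega> + 2"
      using card_insert_disjoint[OF finN vn] dv unfolding degree_def by simp
    moreover have "card (insert v {u \<in> verts G. adj G v u}) \<le> card (verts G)"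
      using v sg_fin[OF sg] by (intro card_mono) auto
    ultimately show False using cV by simp
  qed
qed



lemma hard_dir:
  assumes sg: "simple_graph G" and w: "\<omega> \<ge> 4" and conn: "connected_graph G"
    and iso: "graph_iso (clique_graph \<omega> (line_graph G)) G"
  shows "regular \<omega> G"
proof -
  obtain f where bij: "bij_betw f (CL \<omega> G) (verts G)"
    and fadj: "\<forall>K\<in>CL \<omega> G. \<forall>K'\<in>CL \<omega> G. adj (clique_graph \<omega> (line_graph G)) K K' \<longleftrightarrow> adj G (f K) (f K')"
    using iso unfolding graph_iso_def by blast
  have fK: "\<forall>K\<in>CL \<omega> G. f K \<in> verts G" using bij bij_betwE by blast
  have nb: "\<forall>K\<in>CL \<omega> G. card (nbrs \<omega> G K) = degree G (f K)"
    using nbr_deg[OF sg bij fadj] unfolding nbrs_def by blast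
  have Vfin: "finite (verts G)" using sg_fin[OF sg] .
  have Vne: "verts G \<noteq> {}" using conn unfolding connected_graph_def by blast
  define D where "D = Max (degree G ` verts G)"
  have Dge: "\<forall>u\<in>verts G. degree G u \<le> D" unfolding D_def using Vfin by simp
  have "D \<in> degree G ` verts G" unfolding D_def using Vfin Vne by (intro Max_in) auto
  then obtain v where v: "v \<in> verts G" and dv: "degree G v = D" by auto
  have nbD: "\<forall>K\<in>CL \<omega> G. card (nbrs \<omega> G K) \<le> D" using nb fK Dge by metis
  consider (le) "D \<le> \<omega>" | (eq) "D = \<omega> + 1" | (ge) "D \<ge> \<omega> + 2" by linarith
  then show ?thesis
  proof cases
    case le
    define R where "R = {c \<in> verts G. degree G c = \<omega>}"
    have RV: "R \<subseteq> verts G" unfolding R_def by blast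
    have finR: "finite R" using finite_subset[OF RV Vfin] .
    have sub: "CL \<omega> G \<subseteq> estar G ` R"
    proof
      fix K assume "K \<in> CL \<omega> G"
      then obtain c where c: "c \<in> verts G" "K \<subseteq> estar G c" and cK: "card K = \<omega>"
        using mem_CL[OF sg w] by blast
      have cS: "card (estar G c) \<le> \<omega>" using degree_estar[OF sg c(1)] Dge c(1) le by fastforce
      have KS: "K = estar G c" using card_seteq[OF fin_estar[OF sg] c(2)] cK cS by simp
      then have "degree G c = \<omega>" using degree_estar[OF sg c(1)] cK by simp
      then show "K \<in> estar G ` R" using KS c(1) R_def by blast
    qed
    have "card (verts G) = card (CL \<omega> G)" using bij_betw_same_card[OF bij] by simp
    also have "\<dots> \<le> card (estar G ` R)" using sub finR by (intro card_mono) auto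
    also have "\<dots> \<le> card R" using finR by (rule card_image_le)
    finally have "R = verts G" using card_seteq[OF Vfin RV] by blast
    then show ?thesis unfolding regular_def R_def by blast
  next
    case eq
    show ?thesis using hard_eq[OF sg w conn bij fadj v] dv Dge eq by simp
  next
    case ge
    have cSv: "card (estar G v) = D" using degree_estar[OF sg v] dv by simp
    show ?thesis using hard_ge[OF sg w v cSv ge nbD] by blast
  qed
qed


theorem theorem5:
  fixes \<Gamma> :: "'a graph" and \<omega> :: nat
  assumes "\<omega> \<ge> 4" and "simple_graph \<Gamma>" and "connected_graph \<Gamma>"
  shows "graph_iso (clique_graph \<omega> (line_graph \<Gamma>)) \<Gamma> \<longleftrightarrow> regular \<omega> \<Gamma>"
  using hard_dir[OF assms(2,1,3)] easy_dir[OF assms(2,1)] by blast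

end
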